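(* Let $\mathcal{A}\subseteq\{0,1\}^d$ be a path set with $\mathrm{rank}(\mathcal{A})=d_0<d$, let $\mathcal{B}\subseteq\mathcal{A}$ be a basis of $\mathcal{A}$ consisting of $d_0$ paths, and let $S=\max_{\mathbf{a}\in\mathcal{A},\,i\in[d_0]}|\nu_{\mathbf{a},i}|$, where $\mathbf{a}=\mathcal{B}\boldsymbol{\nu}_{\mathbf{a}}$. Suppose for $m$ epochs each path of $\mathcal{B}$ is routed once per epoch, let $\mathcal{D}_m$ be the matrix whose rows are the $md_0$ chosen paths, $\mathbf{r}_m$ the vector of observed end-to-end delays, and $\hat{\boldsymbol{\mu}}_m=(\mathcal{D}_m^{\top}\mathcal{D}_m)^{\dagger}\mathcal{D}_m^{\top}\mathbf{r}_m$, where $\dagger$ denotes the Moore–Penrose pseudo-inverse. Then for every $\delta\in(0,1)$, $$\Pr\left(\exists\,\mathbf{a}\in\mathcal{A}:\ \left|\langle \mathbf{a},\boldsymbol{\mu}\rangle-\langle \mathbf{a},\hat{\boldsymbol{\mu}}_m\rangle\right|\geq SR\sqrt{\frac{32\ln (6)d_0^2+32d_0\ln{\delta^{-1}}}{m}}\right)\leq\delta.$$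
   Context: Model: a directed acyclic network with $d$ links; paths $\mathbf{a}\in\{0,1\}^d$ with $a_j=1$ iff the path uses link $j$; unknown fixed mean link-delay vector $\boldsymbol{\mu}\in\mathbb{R}^d$. Routing through $\mathbf{a}_{I_t}$ in round $t$ yields only the end-to-end delay $L_{t,I_t}=\langle\mathbf{a}_{I_t},\boldsymbol{\mu}\rangle+\eta_t$, where $\eta_t$ is conditionally $R$-sub-Gaussian ($R\ge0$ known): $\mathbb{E}[\exp(\alpha\eta_t)\mid \mathbf{a}_{I_1},\ldots,\mathbf{a}_{I_{t-1}},\eta_1,\ldots,\eta_{t-1}]\le\exp(\alpha^2R^2/2)$ for all real $\alpha$, and $\mathbb{E}[\eta_t\mid\text{same}]=0$. A basis $\mathcal{B}$ of $\mathcal{A}$ is a $d\times d_0$ matrix of linearly independent columns from $\mathcal{A}$ such that every $\mathbf{a}\in\mathcal{A}$ equals $\mathcal{B}\boldsymbol{\nu}_{\mathbf{a}}$ for a (unique) $\boldsymbol{\nu}_{\mathbf{a}}\in\mathbb{R}^{d_0}$. *)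

theory Defs
  imports "HOL-Probability.Probability" "Jordan_Normal_Form.Matrix"
begin

definition penrose_conds :: "real mat \<Rightarrow> real mat \<Rightarrow> bool" where
  "penrose_conds A X \<longleftrightarrow>
     X \<in> carrier_mat (dim_col A) (dim_row A) \<and>
     A * X * A = A \<and> X * A * X = X \<and>
     transpose_mat (A * X) = A * X \<and> transpose_mat (X * A) = X * A"

definition pinv :: "real mat \<Rightarrow> real mat" where
  "pinv A = (THE X. penrose_conds A X)"

definition path_vecs :: "nat \<Rightarrow> real vec set" where
  "path_vecs d = {a \<in> carrier_vec d. \<forall>i<d. a $ i = 0 \<or> a $ i = 1}"

definition is_basis_of :: "nat \<Rightarrow> nat \<Rightarrow> real mat \<Rightarrow> real vec set \<Rightarrow> bool" where
  "is_basis_of d d0 B A \<longleftrightarrow>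
     B \<in> carrier_mat d d0 \<and> (\<forall>j<d0. col B j \<in> A) \<and>
     (\<forall>\<nu>\<in>carrier_vec d0. mult_mat_vec B \<nu> = 0\<^sub>v d \<longrightarrow> \<nu> = 0\<^sub>v d0) \<and>
     (\<forall>a\<in>A. \<exists>\<nu>\<in>carrier_vec d0. a = mult_mat_vec B \<nu>)"

definition coeffs :: "nat \<Rightarrow> real mat \<Rightarrow> real vec \<Rightarrow> real vec" where
  "coeffs d0 B a = (THE \<nu>. \<nu> \<in> carrier_vec d0 \<and> a = mult_mat_vec B \<nu>)"

definition coeff_bound :: "nat \<Rightarrow> real mat \<Rightarrow> real vec set \<Rightarrow> real" where
  "coeff_bound d0 B A = Max {\<bar>coeffs d0 B a $ i\<bar> | a i. a \<in> A \<and> i < d0}"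

definition noise_filt :: "'w measure \<Rightarrow> (nat \<Rightarrow> 'w \<Rightarrow> real) \<Rightarrow> nat \<Rightarrow> 'w measure" where
  "noise_filt M \<eta> t = sigma (space M)
     (\<Union>s<t. {\<eta> s -` U \<inter> space M | U. U \<in> sets borel})"

text \<open>Schedule: in every epoch k<m, positions k*d0 .. (k+1)*d0-1 route each basis
  path exactly once (sigma t = index of the basis column routed at time t).\<close>
definition epoch_schedule :: "nat \<Rightarrow> nat \<Rightarrow> (nat \<Rightarrow> nat) \<Rightarrow> bool" where
  "epoch_schedule m d0 \<sigma> \<longleftrightarrow>
     (\<forall>k<m. bij_betw \<sigma> {k*d0..<(k+1)*d0} {..<d0})"

definition design_mat :: "nat \<Rightarrow> nat \<Rightarrow> nat \<Rightarrow> real mat \<Rightarrow> (nat \<Rightarrow> nat) \<Rightarrow> real mat" where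
  "design_mat d m d0 B \<sigma> = mat_of_rows d (map (\<lambda>t. col B (\<sigma> t)) [0..<m*d0])"

definition delay_vec :: "nat \<Rightarrow> nat \<Rightarrow> real mat \<Rightarrow> (nat \<Rightarrow> nat) \<Rightarrow> real vec
     \<Rightarrow> (nat \<Rightarrow> real) \<Rightarrow> real vec" where
  "delay_vec m d0 B \<sigma> \<mu> e = vec (m*d0) (\<lambda>t. scalar_prod (col B (\<sigma> t)) \<mu> + e t)"

definition ls_estimate :: "real mat \<Rightarrow> real vec \<Rightarrow> real vec" where
  "ls_estimate D r = mult_mat_vec (pinv (transpose_mat D * D)) (mult_mat_vec (transpose_mat D) r)"

end

theory Submission
  imports Defs "Jordan_Normal_Form.Determinant"
begin


lemma mat_eq_by_vec:
  fixes A A' :: "real mat"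
  assumes "A \<in> carrier_mat nr nc" "A' \<in> carrier_mat nr nc"
    and "\<And>v. v \<in> carrier_vec nc \<Longrightarrow> A *\<^sub>v v = A' *\<^sub>v v"
  shows "A = A'"
proof (rule eq_matI)
  fix i j assume i: "i < dim_row A'" and j: "j < dim_col A'"
  have "(A *\<^sub>v unit_vec nc j) $ i = (A' *\<^sub>v unit_vec nc j) $ i"
    using assms(3)[of "unit_vec nc j"] by simp
  thus "A $$ (i, j) = A' $$ (i, j)" using assms(1,2) i j
    by simp
qed (use assms in auto)

lemma smult_mat_vec: assumes "(A::real mat) \<in> carrier_mat nr nc" "v \<in> carrier_vec nc"
  shows "(k \<cdot>\<^sub>m A) *\<^sub>v v = k \<cdot>\<^sub>v (A *\<^sub>v v)"
  using assms by (intro eq_vecI) (auto simp: scalar_prod_def sum_distrib_left mult.assoc)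

lemma self_scalar_zero: fixes v :: "real vec" assumes "v \<in> carrier_vec n" "v \<bullet> v = 0"
  shows "v = 0\<^sub>v n"
proof -
  have "(\<Sum>i\<in>{0..<n}. v $ i * v $ i) = 0" using assms by (simp add: scalar_prod_def)
  hence "\<forall>i\<in>{0..<n}. v $ i * v $ i = 0"
    by (subst (asm) sum_nonneg_eq_0_iff) auto
  thus ?thesis using assms(1) by (intro eq_vecI) auto
qed

lemma penrose_unique:
  assumes A: "A \<in> carrier_mat n n" and PX: "penrose_conds A X" and PY: "penrose_conds A Y"
  shows "X = Y"
proof -
  from PX A have X: "X \<in> carrier_mat n n" and X1: "A * X * A = A" and X2: "X * A * X = X"
    and X3: "transpose_mat (A * X) = A * X" and X4: "transpose_mat (X * A) = X * A"
    by (auto simp: penrose_conds_def)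
  from PY A have Y: "Y \<in> carrier_mat n n" and Y1: "A * Y * A = A" and Y2: "Y * A * Y = Y"
    and Y3: "transpose_mat (A * Y) = A * Y" and Y4: "transpose_mat (Y * A) = Y * A"
    by (auto simp: penrose_conds_def)
  have AX: "A * X \<in> carrier_mat n n" and XA: "X * A \<in> carrier_mat n n"
    and AY: "A * Y \<in> carrier_mat n n" and YA: "Y * A \<in> carrier_mat n n"
    using A X Y by auto
  have tX: "transpose_mat X \<in> carrier_mat n n" and tY: "transpose_mat Y \<in> carrier_mat n n"
    and tAc: "transpose_mat A \<in> carrier_mat n n" using A X Y by auto
  have tA1: "transpose_mat A = transpose_mat A * (A * Y)"
  proof -
    have "transpose_mat A = transpose_mat (A * Y * A)" using Y1 by simp
    also have "\<dots> = transpose_mat A * transpose_mat (A * Y)"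
      by (rule transpose_mult[OF AY A])
    finally show ?thesis using Y3 by simp
  qed
  have tA2: "transpose_mat A = (X * A) * transpose_mat A"
  proof -
    have "transpose_mat A = transpose_mat (A * X * A)" using X1 by simp
    also have "\<dots> = transpose_mat (A * (X * A))" using A X by simp
    also have "\<dots> = transpose_mat (X * A) * transpose_mat A"
      by (rule transpose_mult[OF A XA])
    finally show ?thesis using X4 by simp
  qed
  have "X = X * (A * X)" using X2 A X by simp
  also have "\<dots> = X * transpose_mat (A * X)" using X3 by simp
  also have "\<dots> = X * (transpose_mat X * transpose_mat A)"
    using transpose_mult[OF A X] by simp
  also have "\<dots> = X * (transpose_mat X * (transpose_mat A * (A * Y)))" using tA1 by simp
  also have "\<dots> = X * ((transpose_mat X * transpose_mat A) * (A * Y))"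
    by (simp add: assoc_mult_mat[OF tX tAc AY])
  also have "\<dots> = X * (transpose_mat (A * X) * (A * Y))"
    using transpose_mult[OF A X] by simp
  also have "\<dots> = X * ((A * X) * (A * Y))" using X3 by simp
  also have "\<dots> = (X * A * X) * (A * Y)" by (metis assoc_mult_mat[OF X A X] assoc_mult_mat[OF X AX AY])
  also have "\<dots> = X * A * Y" using X2 A X Y by simp
  finally have eqX: "X = X * A * Y" .
  have "Y = (Y * A) * Y" using Y2 A Y by simp
  also have "\<dots> = transpose_mat (Y * A) * Y" using Y4 by simp
  also have "\<dots> = (transpose_mat A * transpose_mat Y) * Y"
    using transpose_mult[OF Y A] by simp
  also have "\<dots> = ((X * A) * transpose_mat A * transpose_mat Y) * Y" using tA2 by simp
  also have "\<dots> = (X * A) * (transpose_mat A * transpose_mat Y) * Y"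
    by (metis assoc_mult_mat[OF XA tAc tY])
  also have "\<dots> = (X * A) * transpose_mat (Y * A) * Y"
    using transpose_mult[OF Y A] by simp
  also have "\<dots> = (X * A) * (Y * A) * Y" using Y4 by simp
  also have "\<dots> = X * A * (Y * A * Y)" by (metis assoc_mult_mat[OF XA YA Y])
  also have "\<dots> = X * A * Y" using Y2 by simp
  finally show ?thesis using eqX by simp
qed

lemma epoch_schedule_mono: "epoch_schedule (Suc m) d0 \<sigma> \<Longrightarrow> epoch_schedule m d0 \<sigma>"
  by (auto simp: epoch_schedule_def)

lemma sched_range: assumes "epoch_schedule m d0 \<sigma>" "t < m * d0" shows "\<sigma> t < d0"
proof -
  have d0: "0 < d0" using assms(2) by (cases d0) auto
  define k where "k = t div d0"
  have k: "k < m" using assms(2) d0 unfolding k_def by (simp add: less_mult_imp_div_less)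
  have "t \<in> {k*d0..<(k+1)*d0}" using d0 unfolding k_def
    by (auto simp: dividend_less_div_times)
  moreover have "bij_betw \<sigma> {k*d0..<(k+1)*d0} {..<d0}" using assms(1) k by (auto simp: epoch_schedule_def)
  ultimately show ?thesis by (auto dest: bij_betwE)
qed

lemma epoch_sum: assumes "epoch_schedule m d0 \<sigma>"
  shows "(\<Sum>t<m*d0. (f::nat \<Rightarrow> real) (\<sigma> t)) = real m * (\<Sum>j<d0. f j)"
  using assms
proof (induction m)
  case 0 then show ?case by simp
next
  case (Suc m)
  have IH: "(\<Sum>t<m*d0. f (\<sigma> t)) = real m * (\<Sum>j<d0. f j)"
    using Suc.IH epoch_schedule_mono[OF Suc.prems] by blast
  have bij: "bij_betw \<sigma> {m*d0..<(m+1)*d0} {..<d0}" using Suc.prems by (auto simp: epoch_schedule_def)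
  have "(\<Sum>t<Suc m*d0. f (\<sigma> t)) = (\<Sum>t\<in>{0..<m*d0}. f (\<sigma> t)) + (\<Sum>t\<in>{m*d0..<(m+1)*d0}. f (\<sigma> t))"
    by (simp add: atLeast0LessThan[symmetric] sum.atLeastLessThan_concat)
  also have "(\<Sum>t\<in>{m*d0..<(m+1)*d0}. f (\<sigma> t)) = (\<Sum>j<d0. f j)"
    by (rule sum.reindex_bij_betw[OF bij])
  finally show ?case using IH by (simp add: atLeast0LessThan algebra_simps)
qed

lemma swap_sum: fixes n :: nat assumes "\<And>t. t < n \<Longrightarrow> \<sigma> t < d0"
  shows "(\<Sum>j<d0. (f::nat\<Rightarrow>real) j * (\<Sum>t\<in>{t. t < n \<and> \<sigma> t = j}. e t)) = (\<Sum>t<n. f (\<sigma> t) * e t)"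
proof -
  have "(\<Sum>j<d0. f j * (\<Sum>t\<in>{t. t < n \<and> \<sigma> t = j}. e t))
      = (\<Sum>j<d0. (\<Sum>t\<in>{t\<in>{..<n}. \<sigma> t = j}. f (\<sigma> t) * e t))"
    by (auto simp: sum_distrib_left intro!: sum.cong)
  also have "\<dots> = (\<Sum>t<n. f (\<sigma> t) * e t)"
    by (rule sum.group) (use assms in auto)
  finally show ?thesis .
qed


lemma smult_smult_mat: "a \<cdot>\<^sub>m (b \<cdot>\<^sub>m A) = (a * b) \<cdot>\<^sub>m (A::real mat)"
  by (intro eq_matI) auto

lemma one_smult_mat': "1 \<cdot>\<^sub>m A = (A::real mat)"
  by (intro eq_matI) auto

lemma smult_mult_smult:
  assumes A: "A \<in> carrier_mat nr n" and X: "(X::real mat) \<in> carrier_mat n nc"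
  shows "(a \<cdot>\<^sub>m A) * (b \<cdot>\<^sub>m X) = (a * b) \<cdot>\<^sub>m (A * X)"
proof -
  have bX: "b \<cdot>\<^sub>m X \<in> carrier_mat n nc" using X by simp
  have "(a \<cdot>\<^sub>m A) * (b \<cdot>\<^sub>m X) = a \<cdot>\<^sub>m (A * (b \<cdot>\<^sub>m X))" by (rule mult_smult_assoc_mat[OF A bX])
  also have "A * (b \<cdot>\<^sub>m X) = b \<cdot>\<^sub>m (A * X)" by (rule mult_smult_distrib[OF A X])
  finally show ?thesis by (simp add: smult_smult_mat)
qed

lemma penrose_scale:
  assumes A: "A \<in> carrier_mat nr nc" and P: "penrose_conds A X" and k: "(k::real) \<noteq> 0"
  shows "penrose_conds (k \<cdot>\<^sub>m A) ((1 / k) \<cdot>\<^sub>m X)"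
proof -
  from P A have X: "X \<in> carrier_mat nc nr" and X1: "A * X * A = A" and X2: "X * A * X = X"
    and X3: "transpose_mat (A * X) = A * X" and X4: "transpose_mat (X * A) = X * A"
    by (auto simp: penrose_conds_def)
  have AXc: "A * X \<in> carrier_mat nr nr" using A X by simp
  have XAc: "X * A \<in> carrier_mat nc nc" using A X by simp
  have AX: "(k \<cdot>\<^sub>m A) * ((1 / k) \<cdot>\<^sub>m X) = A * X"
    using smult_mult_smult[OF A X, of k "1/k"] k by (simp add: one_smult_mat')
  have XA: "((1 / k) \<cdot>\<^sub>m X) * (k \<cdot>\<^sub>m A) = X * A"
    using smult_mult_smult[OF X A, of "1/k" k] k by (simp add: one_smult_mat')
  have 1: "(k \<cdot>\<^sub>m A) * ((1 / k) \<cdot>\<^sub>m X) * (k \<cdot>\<^sub>m A) = k \<cdot>\<^sub>m A"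
    unfolding AX using mult_smult_distrib[OF AXc A, of k] X1 by simp
  have 2: "((1 / k) \<cdot>\<^sub>m X) * (k \<cdot>\<^sub>m A) * ((1 / k) \<cdot>\<^sub>m X) = (1 / k) \<cdot>\<^sub>m X"
    unfolding XA using mult_smult_distrib[OF XAc X, of "1/k"] X2 by simp
  show ?thesis unfolding penrose_conds_def
    using 1 2 AX XA X3 X4 X A by simp
qed


lemma scal_transpose: assumes "B \<in> carrier_mat d d0" "\<nu> \<in> carrier_vec d0" "z \<in> carrier_vec d"
  shows "(B *\<^sub>v \<nu>) \<bullet> (z::real vec) = \<nu> \<bullet> (transpose_mat B *\<^sub>v z)"
  using transpose_vec_mult_scalar[of "transpose_mat B" d0 d z \<nu>] assms by simp

context
  fixes d d0 m :: nat and B :: "real mat" and \<sigma> :: "nat \<Rightarrow> nat"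
  assumes B: "B \<in> carrier_mat d d0"
    and ker: "\<forall>\<nu>\<in>carrier_vec d0. B *\<^sub>v \<nu> = 0\<^sub>v d \<longrightarrow> \<nu> = 0\<^sub>v d0"
    and sched: "epoch_schedule m d0 \<sigma>" and m: "0 < m"
begin

lemma D_carrier: "design_mat d m d0 B \<sigma> \<in> carrier_mat (m*d0) d"
  unfolding design_mat_def by (metis length_map length_upt minus_nat.diff_0 mat_of_rows_carrier(1))

lemma D_row: "t < m*d0 \<Longrightarrow> row (design_mat d m d0 B \<sigma>) t = col B (\<sigma> t)"
  unfolding design_mat_def using B by (subst mat_of_rows_row) auto

lemma D_index: "t < m*d0 \<Longrightarrow> i < d \<Longrightarrow> design_mat d m d0 B \<sigma> $$ (t,i) = B $$ (i, \<sigma> t)"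
proof -
  assume t: "t < m*d0" and i: "i < d"
  have "design_mat d m d0 B \<sigma> $$ (t,i) = row (design_mat d m d0 B \<sigma>) t $ i"
    using D_carrier t i by simp
  also have "\<dots> = B $$ (i, \<sigma> t)" using D_row[OF t] B i sched_range[OF sched t] by simp
  finally show ?thesis .
qed

lemma G_eq: "transpose_mat (design_mat d m d0 B \<sigma>) * design_mat d m d0 B \<sigma>
   = real m \<cdot>\<^sub>m (B * transpose_mat B)"
proof (rule eq_matI)
  let ?D = "design_mat d m d0 B \<sigma>"
  fix i k assume i: "i < dim_row (real m \<cdot>\<^sub>m (B * transpose_mat B))"
     and k: "k < dim_col (real m \<cdot>\<^sub>m (B * transpose_mat B))"
  hence i: "i < d" and k: "k < d" using B by auto
  have "(transpose_mat ?D * ?D) $$ (i,k) = (\<Sum>t<m*d0. ?D $$ (t,i) * ?D $$ (t,k))"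
    using D_carrier i k by (simp add: scalar_prod_def atLeast0LessThan)
  also have "\<dots> = (\<Sum>t<m*d0. B $$ (i, \<sigma> t) * B $$ (k, \<sigma> t))"
    using i k by (intro sum.cong) (auto simp: D_index)
  also have "\<dots> = real m * (\<Sum>j<d0. B $$ (i, j) * B $$ (k, j))"
    by (rule epoch_sum[OF sched])
  also have "\<dots> = (real m \<cdot>\<^sub>m (B * transpose_mat B)) $$ (i,k)"
    using B i k by (simp add: scalar_prod_def atLeast0LessThan)
  finally show "(transpose_mat ?D * ?D) $$ (i,k) = (real m \<cdot>\<^sub>m (B * transpose_mat B)) $$ (i,k)" .
qed (use D_carrier B in auto)

lemma r_eq: assumes mu: "\<mu> \<in> carrier_vec d"
  shows "delay_vec m d0 B \<sigma> \<mu> e = design_mat d m d0 B \<sigma> *\<^sub>v \<mu> + Matrix.vec (m*d0) e"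
  using D_carrier D_row mu by (intro eq_vecI) (auto simp: delay_vec_def)

lemma DTe: "transpose_mat (design_mat d m d0 B \<sigma>) *\<^sub>v Matrix.vec (m*d0) e
   = B *\<^sub>v Matrix.vec d0 (\<lambda>j. \<Sum>t\<in>{t. t < m*d0 \<and> \<sigma> t = j}. e t)"
proof -
  let ?D = "design_mat d m d0 B \<sigma>"
  define xf where "xf = (\<lambda>j. \<Sum>t\<in>{t. t < m*d0 \<and> \<sigma> t = j}. e t)"
  have "transpose_mat ?D *\<^sub>v Matrix.vec (m*d0) e = B *\<^sub>v Matrix.vec d0 xf"
  proof (rule eq_vecI)
    fix i assume "i < dim_vec (B *\<^sub>v Matrix.vec d0 xf)"
    hence i: "i < d" using B by simp
    have "(transpose_mat ?D *\<^sub>v Matrix.vec (m*d0) e) $ i = (\<Sum>t<m*d0. ?D $$ (t,i) * e t)"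
      using D_carrier i by (simp add: scalar_prod_def atLeast0LessThan)
    also have "\<dots> = (\<Sum>t<m*d0. B $$ (i, \<sigma> t) * e t)"
      using i by (intro sum.cong) (auto simp: D_index)
    also have "\<dots> = (\<Sum>j<d0. B $$ (i,j) * xf j)"
      unfolding xf_def by (rule swap_sum[symmetric]) (rule sched_range[OF sched])
    also have "\<dots> = row B i \<bullet> Matrix.vec d0 xf"
      unfolding scalar_prod_def using B i by (auto simp: atLeast0LessThan intro!: sum.cong)
    also have "\<dots> = (B *\<^sub>v Matrix.vec d0 xf) $ i" using B i by simp
    finally show "(transpose_mat ?D *\<^sub>v Matrix.vec (m*d0) e) $ i = (B *\<^sub>v Matrix.vec d0 xf) $ i" .
  next
    show "dim_vec (transpose_mat ?D *\<^sub>v Matrix.vec (m*d0) e) = dim_vec (B *\<^sub>v Matrix.vec d0 xf)"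
      using D_carrier B by simp
  qed
  thus ?thesis unfolding xf_def .
qed

lemma exists_V: "\<exists>V\<in>carrier_mat d0 d0. V * (transpose_mat B * B) = 1\<^sub>m d0 \<and> (transpose_mat B * B) * V = 1\<^sub>m d0"
proof -
  have Wc: "transpose_mat B * B \<in> carrier_mat d0 d0" using B by auto
  have dW: "det (transpose_mat B * B) \<noteq> 0"
  proof
    assume "det (transpose_mat B * B) = 0"
    then obtain v where v: "v \<in> carrier_vec d0" "v \<noteq> 0\<^sub>v d0" "(transpose_mat B * B) *\<^sub>v v = 0\<^sub>v d0"
      using det_0_iff_vec_prod_zero[OF Wc] by auto
    have Bv: "B *\<^sub>v v \<in> carrier_vec d" using B v by simp
    have "(B *\<^sub>v v) \<bullet> (B *\<^sub>v v) = v \<bullet> (transpose_mat B *\<^sub>v (B *\<^sub>v v))"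
      by (rule scal_transpose[OF B v(1) Bv])
    also have "transpose_mat B *\<^sub>v (B *\<^sub>v v) = 0\<^sub>v d0"
      using v(3) assoc_mult_mat_vec[of "transpose_mat B" d0 d B d0 v] B v(1) by simp
    also have "v \<bullet> 0\<^sub>v d0 = 0" using v(1) by simp
    finally have "B *\<^sub>v v = 0\<^sub>v d" using self_scalar_zero[OF Bv] by blast
    thus False using ker v by auto
  qed
  have "transpose_mat B * B \<in> Units (ring_mat TYPE(real) d0 ())"
    by (rule det_non_zero_imp_unit[OF Wc dW])
  thus ?thesis
    unfolding Units_def ring_mat_def by auto
qed

context
  fixes V :: "real mat"
  assumes Vc: "V \<in> carrier_mat d0 d0"
    and VW: "V * (transpose_mat B * B) = 1\<^sub>m d0"
    and WV: "(transpose_mat B * B) * V = 1\<^sub>m d0"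
begin

lemma Bt: "transpose_mat B \<in> carrier_mat d0 d" using B by simp
lemma Wc: "transpose_mat B * B \<in> carrier_mat d0 d0" using B by simp

lemma WVv: "y \<in> carrier_vec d0 \<Longrightarrow> transpose_mat B *\<^sub>v (B *\<^sub>v (V *\<^sub>v y)) = y"
proof -
  assume y: "y \<in> carrier_vec d0"
  have Vy: "V *\<^sub>v y \<in> carrier_vec d0" using Vc y by simp
  have "y = ((transpose_mat B * B) * V) *\<^sub>v y" using WV y by simp
  also have "\<dots> = (transpose_mat B * B) *\<^sub>v (V *\<^sub>v y)" by (rule assoc_mult_mat_vec[OF Wc Vc y])
  also have "\<dots> = transpose_mat B *\<^sub>v (B *\<^sub>v (V *\<^sub>v y))"
    by (rule assoc_mult_mat_vec[OF Bt B Vy])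
  finally show ?thesis by (rule sym)
qed

lemma VWv: "y \<in> carrier_vec d0 \<Longrightarrow> V *\<^sub>v (transpose_mat B *\<^sub>v (B *\<^sub>v y)) = y"
proof -
  assume y: "y \<in> carrier_vec d0"
  have "y = (V * (transpose_mat B * B)) *\<^sub>v y" using VW y by simp
  also have "\<dots> = V *\<^sub>v ((transpose_mat B * B) *\<^sub>v y)" by (rule assoc_mult_mat_vec[OF Vc Wc y])
  also have "(transpose_mat B * B) *\<^sub>v y = transpose_mat B *\<^sub>v (B *\<^sub>v y)"
    by (rule assoc_mult_mat_vec[OF Bt B y])
  finally show ?thesis by (rule sym)
qed

lemma Vsym: "transpose_mat V = V"
proof -
  have tV: "transpose_mat V \<in> carrier_mat d0 d0" using Vc by simp
  have Wsym: "transpose_mat (transpose_mat B * B) = transpose_mat B * B"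
    using transpose_mult[OF Bt B] by simp
  have "transpose_mat V * (transpose_mat B * B) = transpose_mat V * transpose_mat (transpose_mat B * B)"
    by (simp only: Wsym)
  also have "\<dots> = transpose_mat ((transpose_mat B * B) * V)" by (rule transpose_mult[OF Wc Vc, symmetric])
  also have "\<dots> = 1\<^sub>m d0" by (simp only: WV transpose_one)
  finally have 1: "transpose_mat V * (transpose_mat B * B) = 1\<^sub>m d0" .
  have "transpose_mat V = transpose_mat V * 1\<^sub>m d0" using tV by simp
  also have "\<dots> = transpose_mat V * ((transpose_mat B * B) * V)" by (simp only: WV)
  also have "\<dots> = (transpose_mat V * (transpose_mat B * B)) * V" by (rule assoc_mult_mat[OF tV Wc Vc, symmetric])
  also have "\<dots> = V" by (simp only: 1 left_mult_one_mat[OF Vc])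
  finally show ?thesis .
qed

lemma BV: "B * V \<in> carrier_mat d d0" by (rule mult_carrier_mat[OF B Vc])
lemma BVV: "B * V * V \<in> carrier_mat d d0" by (rule mult_carrier_mat[OF BV Vc])
lemma Y0c: "B * V * V * transpose_mat B \<in> carrier_mat d d" by (rule mult_carrier_mat[OF BVV Bt])
lemma G0c: "B * transpose_mat B \<in> carrier_mat d d" by (rule mult_carrier_mat[OF B Bt])
lemma Pc: "B * V * transpose_mat B \<in> carrier_mat d d" by (rule mult_carrier_mat[OF BV Bt])

lemmas cv = mult_mat_vec_carrier[OF B] mult_mat_vec_carrier[OF Vc] mult_mat_vec_carrier[OF Bt]

lemma G0v: "x \<in> carrier_vec d \<Longrightarrow> (B * transpose_mat B) *\<^sub>v x = B *\<^sub>v (transpose_mat B *\<^sub>v x)"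
  by (rule assoc_mult_mat_vec[OF B Bt])

lemma Y0v: "x \<in> carrier_vec d \<Longrightarrow> (B * V * V * transpose_mat B) *\<^sub>v x = B *\<^sub>v (V *\<^sub>v (V *\<^sub>v (transpose_mat B *\<^sub>v x)))"
proof -
  assume x: "x \<in> carrier_vec d"
  have Btx: "transpose_mat B *\<^sub>v x \<in> carrier_vec d0" using Bt x by (rule mult_mat_vec_carrier)
  have VBtx: "V *\<^sub>v (transpose_mat B *\<^sub>v x) \<in> carrier_vec d0" using Vc Btx by (rule mult_mat_vec_carrier)
  have "(B * V * V * transpose_mat B) *\<^sub>v x = (B * V * V) *\<^sub>v (transpose_mat B *\<^sub>v x)"
    by (rule assoc_mult_mat_vec[OF BVV Bt x])
  also have "\<dots> = (B * V) *\<^sub>v (V *\<^sub>v (transpose_mat B *\<^sub>v x))"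
    by (rule assoc_mult_mat_vec[OF BV Vc Btx])
  also have "\<dots> = B *\<^sub>v (V *\<^sub>v (V *\<^sub>v (transpose_mat B *\<^sub>v x)))"
    by (rule assoc_mult_mat_vec[OF B Vc VBtx])
  finally show ?thesis .
qed

lemma Pv: "x \<in> carrier_vec d \<Longrightarrow> (B * V * transpose_mat B) *\<^sub>v x = B *\<^sub>v (V *\<^sub>v (transpose_mat B *\<^sub>v x))"
proof -
  assume x: "x \<in> carrier_vec d"
  have Btx: "transpose_mat B *\<^sub>v x \<in> carrier_vec d0" using Bt x by (rule mult_mat_vec_carrier)
  have "(B * V * transpose_mat B) *\<^sub>v x = (B * V) *\<^sub>v (transpose_mat B *\<^sub>v x)" by (rule assoc_mult_mat_vec[OF BV Bt x])
  also have "\<dots> = B *\<^sub>v (V *\<^sub>v (transpose_mat B *\<^sub>v x))" by (rule assoc_mult_mat_vec[OF B Vc Btx])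
  finally show ?thesis .
qed

lemma GY: "(B * transpose_mat B) * (B * V * V * transpose_mat B) = B * V * transpose_mat B"
proof (rule mat_eq_by_vec[OF mult_carrier_mat[OF G0c Y0c] Pc])
  fix x :: "real vec" assume x: "x \<in> carrier_vec d"
  have Btx: "transpose_mat B *\<^sub>v x \<in> carrier_vec d0" using Bt x by (rule mult_mat_vec_carrier)
  have VBtx: "V *\<^sub>v (transpose_mat B *\<^sub>v x) \<in> carrier_vec d0" using Vc Btx by (rule mult_mat_vec_carrier)
  have Y0x: "(B * V * V * transpose_mat B) *\<^sub>v x \<in> carrier_vec d" using Y0c x by (rule mult_mat_vec_carrier)
  have "((B * transpose_mat B) * (B * V * V * transpose_mat B)) *\<^sub>v x
      = (B * transpose_mat B) *\<^sub>v ((B * V * V * transpose_mat B) *\<^sub>v x)"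
    by (rule assoc_mult_mat_vec[OF G0c Y0c x])
  also have "\<dots> = B *\<^sub>v (transpose_mat B *\<^sub>v (B *\<^sub>v (V *\<^sub>v (V *\<^sub>v (transpose_mat B *\<^sub>v x)))))"
  proof -
    have c: "B *\<^sub>v (V *\<^sub>v (V *\<^sub>v (transpose_mat B *\<^sub>v x))) \<in> carrier_vec d" by (intro cv x)
    show ?thesis by (simp only: Y0v[OF x] G0v[OF c])
  qed
  also have "transpose_mat B *\<^sub>v (B *\<^sub>v (V *\<^sub>v (V *\<^sub>v (transpose_mat B *\<^sub>v x)))) = V *\<^sub>v (transpose_mat B *\<^sub>v x)"
    by (rule WVv[OF VBtx])
  also have "B *\<^sub>v (V *\<^sub>v (transpose_mat B *\<^sub>v x)) = (B * V * transpose_mat B) *\<^sub>v x"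
    by (rule Pv[OF x, symmetric])
  finally show "((B * transpose_mat B) * (B * V * V * transpose_mat B)) *\<^sub>v x = (B * V * transpose_mat B) *\<^sub>v x" .
qed

lemma YG: "(B * V * V * transpose_mat B) * (B * transpose_mat B) = B * V * transpose_mat B"
proof (rule mat_eq_by_vec[OF mult_carrier_mat[OF Y0c G0c] Pc])
  fix x :: "real vec" assume x: "x \<in> carrier_vec d"
  have Btx: "transpose_mat B *\<^sub>v x \<in> carrier_vec d0" using Bt x by (rule mult_mat_vec_carrier)
  have G0x: "(B * transpose_mat B) *\<^sub>v x \<in> carrier_vec d" using G0c x by (rule mult_mat_vec_carrier)
  have "((B * V * V * transpose_mat B) * (B * transpose_mat B)) *\<^sub>v x
      = (B * V * V * transpose_mat B) *\<^sub>v ((B * transpose_mat B) *\<^sub>v x)"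
    by (rule assoc_mult_mat_vec[OF Y0c G0c x])
  also have "\<dots> = B *\<^sub>v (V *\<^sub>v (V *\<^sub>v (transpose_mat B *\<^sub>v (B *\<^sub>v (transpose_mat B *\<^sub>v x)))))"
  proof -
    have c: "B *\<^sub>v (transpose_mat B *\<^sub>v x) \<in> carrier_vec d" by (intro cv x)
    show ?thesis by (simp only: G0v[OF x] Y0v[OF c])
  qed
  also have "V *\<^sub>v (transpose_mat B *\<^sub>v (B *\<^sub>v (transpose_mat B *\<^sub>v x))) = transpose_mat B *\<^sub>v x"
    by (rule VWv[OF Btx])
  also have "B *\<^sub>v (V *\<^sub>v (transpose_mat B *\<^sub>v x)) = (B * V * transpose_mat B) *\<^sub>v x"
    by (rule Pv[OF x, symmetric])
  finally show "((B * V * V * transpose_mat B) * (B * transpose_mat B)) *\<^sub>v x = (B * V * transpose_mat B) *\<^sub>v x" .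
qed

lemma Psym: "transpose_mat (B * V * transpose_mat B) = B * V * transpose_mat B"
proof -
  have "transpose_mat (B * V * transpose_mat B) = transpose_mat (transpose_mat B) * transpose_mat (B * V)"
    by (rule transpose_mult[OF BV Bt])
  also have "transpose_mat (B * V) = transpose_mat V * transpose_mat B" by (rule transpose_mult[OF B Vc])
  also have "transpose_mat V = V" by (rule Vsym)
  also have "transpose_mat (transpose_mat B) = B" by simp
  also have "B * (V * transpose_mat B) = B * V * transpose_mat B" by (rule assoc_mult_mat[OF B Vc Bt, symmetric])
  finally show ?thesis .
qed

lemma GYG: "(B * transpose_mat B) * (B * V * V * transpose_mat B) * (B * transpose_mat B) = B * transpose_mat B"
proof (rule mat_eq_by_vec[OF mult_carrier_mat[OF mult_carrier_mat[OF G0c Y0c] G0c] G0c])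
  fix x :: "real vec" assume x: "x \<in> carrier_vec d"
  have Btx: "transpose_mat B *\<^sub>v x \<in> carrier_vec d0" using Bt x by (rule mult_mat_vec_carrier)
  have G0x: "(B * transpose_mat B) *\<^sub>v x \<in> carrier_vec d" using G0c x by (rule mult_mat_vec_carrier)
  have "((B * transpose_mat B) * (B * V * V * transpose_mat B) * (B * transpose_mat B)) *\<^sub>v x
     = (B * V * transpose_mat B) *\<^sub>v ((B * transpose_mat B) *\<^sub>v x)"
    unfolding GY by (rule assoc_mult_mat_vec[OF Pc G0c x])
  also have "\<dots> = B *\<^sub>v (V *\<^sub>v (transpose_mat B *\<^sub>v (B *\<^sub>v (transpose_mat B *\<^sub>v x))))"
  proof -
    have c: "B *\<^sub>v (transpose_mat B *\<^sub>v x) \<in> carrier_vec d" by (intro cv x)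
    show ?thesis by (simp only: G0v[OF x] Pv[OF c])
  qed
  also have "V *\<^sub>v (transpose_mat B *\<^sub>v (B *\<^sub>v (transpose_mat B *\<^sub>v x))) = transpose_mat B *\<^sub>v x"
    by (rule VWv[OF Btx])
  also have "B *\<^sub>v (transpose_mat B *\<^sub>v x) = (B * transpose_mat B) *\<^sub>v x" by (rule G0v[OF x, symmetric])
  finally show "((B * transpose_mat B) * (B * V * V * transpose_mat B) * (B * transpose_mat B)) *\<^sub>v x = (B * transpose_mat B) *\<^sub>v x" .
qed

lemma YGY: "(B * V * V * transpose_mat B) * (B * transpose_mat B) * (B * V * V * transpose_mat B) = B * V * V * transpose_mat B"
proof (rule mat_eq_by_vec[OF mult_carrier_mat[OF mult_carrier_mat[OF Y0c G0c] Y0c] Y0c])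
  fix x :: "real vec" assume x: "x \<in> carrier_vec d"
  have Btx: "transpose_mat B *\<^sub>v x \<in> carrier_vec d0" using Bt x by (rule mult_mat_vec_carrier)
  have VBtx: "V *\<^sub>v (transpose_mat B *\<^sub>v x) \<in> carrier_vec d0" using Vc Btx by (rule mult_mat_vec_carrier)
  have VVBtx: "V *\<^sub>v (V *\<^sub>v (transpose_mat B *\<^sub>v x)) \<in> carrier_vec d0" using Vc VBtx by (rule mult_mat_vec_carrier)
  have Y0x: "(B * V * V * transpose_mat B) *\<^sub>v x \<in> carrier_vec d" using Y0c x by (rule mult_mat_vec_carrier)
  have "((B * V * V * transpose_mat B) * (B * transpose_mat B) * (B * V * V * transpose_mat B)) *\<^sub>v x
     = (B * V * transpose_mat B) *\<^sub>v ((B * V * V * transpose_mat B) *\<^sub>v x)"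
    unfolding YG by (rule assoc_mult_mat_vec[OF Pc Y0c x])
  also have "\<dots> = B *\<^sub>v (V *\<^sub>v (transpose_mat B *\<^sub>v (B *\<^sub>v (V *\<^sub>v (V *\<^sub>v (transpose_mat B *\<^sub>v x))))))"
  proof -
    have c: "B *\<^sub>v (V *\<^sub>v (V *\<^sub>v (transpose_mat B *\<^sub>v x))) \<in> carrier_vec d" by (intro cv x)
    show ?thesis by (simp only: Y0v[OF x] Pv[OF c])
  qed
  also have "transpose_mat B *\<^sub>v (B *\<^sub>v (V *\<^sub>v (V *\<^sub>v (transpose_mat B *\<^sub>v x)))) = V *\<^sub>v (transpose_mat B *\<^sub>v x)"
    by (rule WVv[OF VBtx])
  also have "B *\<^sub>v (V *\<^sub>v (V *\<^sub>v (transpose_mat B *\<^sub>v x))) = (B * V * V * transpose_mat B) *\<^sub>v x"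
    by (rule Y0v[OF x, symmetric])
  finally show "((B * V * V * transpose_mat B) * (B * transpose_mat B) * (B * V * V * transpose_mat B)) *\<^sub>v x = (B * V * V * transpose_mat B) *\<^sub>v x" .
qed

lemma penrose0: "penrose_conds (B * transpose_mat B) (B * V * V * transpose_mat B)"
  unfolding penrose_conds_def
  using Y0c G0c GYG YGY GY YG Psym carrier_matD[OF B] by simp


end

lemma la_main:
  assumes mu: "\<mu> \<in> carrier_vec d" and nu: "\<nu> \<in> carrier_vec d0"
  shows "(B *\<^sub>v \<nu>) \<bullet> \<mu> - (B *\<^sub>v \<nu>) \<bullet> ls_estimate (design_mat d m d0 B \<sigma>) (delay_vec m d0 B \<sigma> \<mu> e)
    = - (1 / real m) * (\<Sum>t<m*d0. \<nu> $ (\<sigma> t) * e t)"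
proof -
  let ?D = "design_mat d m d0 B \<sigma>"
  let ?n = "m * d0"
  obtain V where Vc: "V \<in> carrier_mat d0 d0" and VW: "V * (transpose_mat B * B) = 1\<^sub>m d0"
    and WV: "(transpose_mat B * B) * V = 1\<^sub>m d0"
    using exists_V by blast
  note cv = cv[OF Vc VW WV]
  define G0 where "G0 = B * transpose_mat B"
  define Y0 where "Y0 = B * V * V * transpose_mat B"
  define G where "G = real m \<cdot>\<^sub>m G0"
  define Y where "Y = (1 / real m) \<cdot>\<^sub>m Y0"
  have G0m: "G0 \<in> carrier_mat d d" unfolding G0_def by (rule G0c[OF Vc VW WV])
  have Y0m: "Y0 \<in> carrier_mat d d" unfolding Y0_def by (rule Y0c[OF Vc VW WV])
  have Gc: "G \<in> carrier_mat d d" unfolding G_def using G0m by simp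
  have Yc: "Y \<in> carrier_mat d d" unfolding Y_def using Y0m by simp
  have Bt: "transpose_mat B \<in> carrier_mat d0 d" by (rule Bt[OF Vc VW WV])
  have m0: "real m \<noteq> 0" using m by simp
  have PY: "penrose_conds G Y" unfolding G_def Y_def G0_def Y0_def
    by (rule penrose_scale[OF G0c[OF Vc VW WV] penrose0[OF Vc VW WV] m0])
  have pinvG: "pinv G = Y"
    unfolding pinv_def
    by (rule the_equality[where P = "penrose_conds G", OF PY]) (rule penrose_unique[OF Gc _ PY])
  have YG: "Y * G = B * V * transpose_mat B"
  proof -
    have "Y * G = ((1 / real m) * real m) \<cdot>\<^sub>m (Y0 * G0)"
      unfolding Y_def G_def by (rule smult_mult_smult[OF Y0m G0m])
    also have "\<dots> = Y0 * G0" using m0 by (simp add: one_smult_mat')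
    also have "\<dots> = B * V * transpose_mat B" unfolding Y0_def G0_def by (rule YG[OF Vc VW WV])
    finally show ?thesis .
  qed
  define xi where "xi = Matrix.vec d0 (\<lambda>j. \<Sum>t\<in>{t. t < m*d0 \<and> \<sigma> t = j}. e t)"
  have xic: "xi \<in> carrier_vec d0" unfolding xi_def by simp
  have Dc: "?D \<in> carrier_mat ?n d" by (rule D_carrier)
  have DtD: "transpose_mat ?D * ?D = G" unfolding G_def G0_def by (rule G_eq)
  have DTr: "transpose_mat ?D *\<^sub>v delay_vec m d0 B \<sigma> \<mu> e = G *\<^sub>v \<mu> + B *\<^sub>v xi"
  proof -
    have Dt: "transpose_mat ?D \<in> carrier_mat d ?n" using Dc by simp
    have Dmu: "?D *\<^sub>v \<mu> \<in> carrier_vec ?n" using Dc mu by (rule mult_mat_vec_carrier)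
    have ve: "Matrix.vec ?n e \<in> carrier_vec ?n" by simp
    have "transpose_mat ?D *\<^sub>v delay_vec m d0 B \<sigma> \<mu> e
        = transpose_mat ?D *\<^sub>v (?D *\<^sub>v \<mu> + Matrix.vec ?n e)" by (simp only: r_eq[OF mu])
    also have "\<dots> = transpose_mat ?D *\<^sub>v (?D *\<^sub>v \<mu>) + transpose_mat ?D *\<^sub>v Matrix.vec ?n e"
      by (rule mult_add_distrib_mat_vec[OF Dt Dmu ve])
    also have "transpose_mat ?D *\<^sub>v (?D *\<^sub>v \<mu>) = (transpose_mat ?D * ?D) *\<^sub>v \<mu>"
      by (rule assoc_mult_mat_vec[OF Dt Dc mu, symmetric])
    also have "transpose_mat ?D *\<^sub>v Matrix.vec ?n e = B *\<^sub>v xi" unfolding xi_def by (rule DTe)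
    finally show ?thesis unfolding DtD .
  qed
  have Gmu: "G *\<^sub>v \<mu> \<in> carrier_vec d" using Gc mu by (rule mult_mat_vec_carrier)
  have Bxi: "B *\<^sub>v xi \<in> carrier_vec d" using B xic by (rule mult_mat_vec_carrier)
  have est: "ls_estimate ?D (delay_vec m d0 B \<sigma> \<mu> e)
     = B *\<^sub>v (V *\<^sub>v (transpose_mat B *\<^sub>v \<mu>)) + (1 / real m) \<cdot>\<^sub>v (B *\<^sub>v (V *\<^sub>v xi))"
  proof -
    have "ls_estimate ?D (delay_vec m d0 B \<sigma> \<mu> e) = Y *\<^sub>v (G *\<^sub>v \<mu> + B *\<^sub>v xi)"
      unfolding ls_estimate_def DTr DtD pinvG ..
    also have "\<dots> = Y *\<^sub>v (G *\<^sub>v \<mu>) + Y *\<^sub>v (B *\<^sub>v xi)"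
      by (rule mult_add_distrib_mat_vec[OF Yc Gmu Bxi])
    also have "Y *\<^sub>v (G *\<^sub>v \<mu>) = (Y * G) *\<^sub>v \<mu>" by (rule assoc_mult_mat_vec[OF Yc Gc mu, symmetric])
    also have "\<dots> = B *\<^sub>v (V *\<^sub>v (transpose_mat B *\<^sub>v \<mu>))" unfolding YG by (rule Pv[OF Vc VW WV mu])
    also have "Y *\<^sub>v (B *\<^sub>v xi) = (1 / real m) \<cdot>\<^sub>v (Y0 *\<^sub>v (B *\<^sub>v xi))"
      unfolding Y_def by (rule smult_mat_vec[OF Y0m Bxi])
    also have "Y0 *\<^sub>v (B *\<^sub>v xi) = B *\<^sub>v (V *\<^sub>v (V *\<^sub>v (transpose_mat B *\<^sub>v (B *\<^sub>v xi))))"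
      unfolding Y0_def by (rule Y0v[OF Vc VW WV Bxi])
    also have "V *\<^sub>v (transpose_mat B *\<^sub>v (B *\<^sub>v xi)) = xi" by (rule VWv[OF Vc VW WV xic])
    finally show ?thesis .
  qed
  have c1: "B *\<^sub>v (V *\<^sub>v (transpose_mat B *\<^sub>v \<mu>)) \<in> carrier_vec d" by (intro cv mu)
  have c2: "B *\<^sub>v (V *\<^sub>v xi) \<in> carrier_vec d" by (intro cv xic)
  have c3: "(1 / real m) \<cdot>\<^sub>v (B *\<^sub>v (V *\<^sub>v xi)) \<in> carrier_vec d" using c2 by simp
  have a: "B *\<^sub>v \<nu> \<in> carrier_vec d" by (intro cv nu)
  have "(B *\<^sub>v \<nu>) \<bullet> ls_estimate ?D (delay_vec m d0 B \<sigma> \<mu> e)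
     = (B *\<^sub>v \<nu>) \<bullet> (B *\<^sub>v (V *\<^sub>v (transpose_mat B *\<^sub>v \<mu>))) + (B *\<^sub>v \<nu>) \<bullet> ((1 / real m) \<cdot>\<^sub>v (B *\<^sub>v (V *\<^sub>v xi)))"
    unfolding est by (rule scalar_prod_add_distrib[OF a c1 c3])
  also have "(B *\<^sub>v \<nu>) \<bullet> ((1 / real m) \<cdot>\<^sub>v (B *\<^sub>v (V *\<^sub>v xi))) = (1 / real m) * ((B *\<^sub>v \<nu>) \<bullet> (B *\<^sub>v (V *\<^sub>v xi)))"
    by (rule scalar_prod_smult_distrib[OF a c2])
  also have "(B *\<^sub>v \<nu>) \<bullet> (B *\<^sub>v (V *\<^sub>v (transpose_mat B *\<^sub>v \<mu>))) = \<nu> \<bullet> (transpose_mat B *\<^sub>v (B *\<^sub>v (V *\<^sub>v (transpose_mat B *\<^sub>v \<mu>))))"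
    by (rule scal_transpose[OF B nu c1])
  also have "transpose_mat B *\<^sub>v (B *\<^sub>v (V *\<^sub>v (transpose_mat B *\<^sub>v \<mu>))) = transpose_mat B *\<^sub>v \<mu>"
    by (rule WVv[OF Vc VW WV]) (intro cv mu)
  also have "\<nu> \<bullet> (transpose_mat B *\<^sub>v \<mu>) = (B *\<^sub>v \<nu>) \<bullet> \<mu>" by (rule scal_transpose[OF B nu mu, symmetric])
  also have "(B *\<^sub>v \<nu>) \<bullet> (B *\<^sub>v (V *\<^sub>v xi)) = \<nu> \<bullet> (transpose_mat B *\<^sub>v (B *\<^sub>v (V *\<^sub>v xi)))"
    by (rule scal_transpose[OF B nu c2])
  also have "transpose_mat B *\<^sub>v (B *\<^sub>v (V *\<^sub>v xi)) = xi" by (rule WVv[OF Vc VW WV xic])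
  also have "\<nu> \<bullet> xi = (\<Sum>t<m*d0. \<nu> $ (\<sigma> t) * e t)"
  proof -
    have "\<nu> \<bullet> xi = (\<Sum>j<d0. \<nu> $ j * (\<Sum>t\<in>{t. t < m*d0 \<and> \<sigma> t = j}. e t))"
      using nu unfolding xi_def by (auto simp: scalar_prod_def atLeast0LessThan intro!: sum.cong)
    also have "\<dots> = (\<Sum>t<m*d0. \<nu> $ (\<sigma> t) * e t)"
      by (rule swap_sum) (rule sched_range[OF sched])
    finally show ?thesis .
  qed
  finally show ?thesis by simp
qed

end


lemma noise_filt_gen_Pow:
  "(\<Union>s<t. {\<eta> s -` U \<inter> space M | U. U \<in> sets borel}) \<subseteq> Pow (space M)"
  by auto

lemma space_noise_filt[simp]: "space (noise_filt M \<eta> t) = space M"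
  unfolding noise_filt_def by (simp add: space_measure_of_conv)

lemma sets_noise_filt:
  "sets (noise_filt M \<eta> t) = sigma_sets (space M) (\<Union>s<t. {\<eta> s -` U \<inter> space M | U. U \<in> sets borel})"
  unfolding noise_filt_def by (rule sets_measure_of[OF noise_filt_gen_Pow])

lemma noise_filt_subalg:
  assumes "\<And>s. s < t \<Longrightarrow> \<eta> s \<in> borel_measurable M"
  shows "subalgebra M (noise_filt M \<eta> t)"
  unfolding subalgebra_def
proof
  show "space (noise_filt M \<eta> t) = space M" by simp
  have "(\<Union>s<t. {\<eta> s -` U \<inter> space M | U. U \<in> sets borel}) \<subseteq> sets M"
    using assms by (auto intro: measurable_sets)
  thus "sets (noise_filt M \<eta> t) \<subseteq> sets M"
    unfolding sets_noise_filt by (rule sets.sigma_sets_subset)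
qed

lemma noise_filt_meas:
  assumes "s < t"
  shows "\<eta> s \<in> borel_measurable (noise_filt M \<eta> t)"
proof (rule measurableI)
  fix A :: "real set" assume "A \<in> sets borel"
  hence "\<eta> s -` A \<inter> space M \<in> (\<Union>s<t. {\<eta> s -` U \<inter> space M | U. U \<in> sets borel})"
    using assms by blast
  thus "\<eta> s -` A \<inter> space (noise_filt M \<eta> t) \<in> sets (noise_filt M \<eta> t)"
    unfolding sets_noise_filt by auto
qed auto

lemma (in sigma_finite_subalgebra) nn_cond_exp_real:
  assumes g: "g \<in> borel_measurable M" "integrable M g" "\<And>x. g x \<ge> 0"
  shows "AE x in M. nn_cond_exp M F (\<lambda>x. ennreal (g x)) x = ennreal (real_cond_exp M F g x)"
proof -
  have [measurable]: "g \<in> borel_measurable M" by (rule g(1))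
  have "(\<integral>\<^sup>+ x. 1 * nn_cond_exp M F (\<lambda>x. ennreal (g x)) x \<partial>M) = (\<integral>\<^sup>+ x. 1 * ennreal (g x) \<partial>M)"
    by (rule nn_cond_exp_intg) auto
  also have "\<dots> < \<infinity>" using g(2) g(3) by (simp add: integrable_iff_bounded)
  finally have fin1: "AE x in M. nn_cond_exp M F (\<lambda>x. ennreal (g x)) x \<noteq> \<infinity>"
    by (intro nn_integral_PInf_AE) auto
  have "(\<integral>\<^sup>+ x. 1 * nn_cond_exp M F (\<lambda>x. ennreal (- g x)) x \<partial>M) = (\<integral>\<^sup>+ x. 1 * ennreal (- g x) \<partial>M)"
    by (rule nn_cond_exp_intg) auto
  also have "\<dots> = 0" using g(3) by (simp add: ennreal_neg)
  finally have fin2: "AE x in M. nn_cond_exp M F (\<lambda>x. ennreal (- g x)) x = 0"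
    by (subst (asm) nn_integral_0_iff_AE) auto
  from fin1 fin2 show ?thesis
    by eventually_elim (auto simp: real_cond_exp_def less_top)
qed

locale noise_setup =
  fixes M :: "'w measure" and \<eta> :: "nat \<Rightarrow> 'w \<Rightarrow> real" and n :: nat and R :: real
  assumes prob: "prob_space M"
    and meas: "\<And>t. t < n \<Longrightarrow> \<eta> t \<in> borel_measurable M"
    and expint: "\<And>t \<alpha>. t < n \<Longrightarrow> integrable M (\<lambda>x. exp (\<alpha> * \<eta> t x))"
    and subg: "\<And>t \<alpha>. t < n \<Longrightarrow>
           AE x in M. real_cond_exp M (noise_filt M \<eta> t) (\<lambda>y. exp (\<alpha> * \<eta> t y)) x
                       \<le> exp (\<alpha>^2 * R^2 / 2)"
begin

lemma mgf_bound:
  fixes c :: "nat \<Rightarrow> real" and lam :: real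
  assumes c: "\<And>t. t < n \<Longrightarrow> \<bar>c t\<bar> \<le> 1"
  shows "k \<le> n \<Longrightarrow> (\<integral>\<^sup>+x. ennreal (exp (lam * (\<Sum>t<k. c t * \<eta> t x))) \<partial>M)
           \<le> ennreal (exp (lam^2 * R^2 * real k / 2))"
proof (induction k)
  case 0
  interpret prob_space M by (rule prob)
  show ?case by (simp add: emeasure_space_1)
next
  case (Suc k)
  interpret prob_space M by (rule prob)
  have k: "k < n" using Suc.prems by simp
  define F where "F = noise_filt M \<eta> k"
  have subalg: "subalgebra M F" unfolding F_def
    by (rule noise_filt_subalg) (use meas k in auto)
  interpret finite_measure_subalgebra M F
    by unfold_locales (rule subalg)
  define a where "a = lam * c k"
  define f where "f = (\<lambda>x. ennreal (exp (lam * (\<Sum>t<k. c t * \<eta> t x))))"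
  define g where "g = (\<lambda>x. exp (a * \<eta> k x))"
  have sumF: "(\<lambda>x. \<Sum>t<k. c t * \<eta> t x) \<in> borel_measurable F"
    unfolding F_def by (intro borel_measurable_sum borel_measurable_times borel_measurable_const noise_filt_meas) auto
  have fF: "f \<in> borel_measurable F" unfolding f_def using sumF by measurable
  have etak[measurable]: "\<eta> k \<in> borel_measurable M" using meas k by auto
  have gM[measurable]: "g \<in> borel_measurable M" unfolding g_def by measurable
  have gint: "integrable M g" unfolding g_def by (rule expint[OF k])
  have ae1: "AE x in M. nn_cond_exp M F (\<lambda>x. ennreal (g x)) x = ennreal (real_cond_exp M F g x)"
    by (rule nn_cond_exp_real[OF gM gint]) (simp add: g_def)
  have ae2: "AE x in M. real_cond_exp M F g x \<le> exp (a^2 * R^2 / 2)"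
    using subg[OF k, of a] unfolding F_def g_def by simp
  have aa: "exp (a^2 * R^2 / 2) \<le> exp (lam^2 * R^2 / 2)"
  proof -
    have "(c k)^2 \<le> 1" using c[OF k] abs_le_square_iff[of "c k" 1] by simp
    hence "a^2 \<le> lam^2" unfolding a_def power_mult_distrib
      by (metis mult.commute mult_left_le zero_le_power2)
    thus ?thesis by (intro exp_le_cancel_iff[THEN iffD2] divide_right_mono mult_right_mono) auto
  qed
  have "(\<integral>\<^sup>+x. ennreal (exp (lam * (\<Sum>t<Suc k. c t * \<eta> t x))) \<partial>M) = (\<integral>\<^sup>+x. f x * ennreal (g x) \<partial>M)"
    unfolding f_def g_def a_def
    by (intro nn_integral_cong) (simp add: ennreal_mult[symmetric] exp_add[symmetric] algebra_simps)
  also have "\<dots> = (\<integral>\<^sup>+x. f x * nn_cond_exp M F (\<lambda>x. ennreal (g x)) x \<partial>M)"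
    by (rule nn_cond_exp_intg[symmetric]) (use fF in auto)
  also have "\<dots> \<le> (\<integral>\<^sup>+x. f x * ennreal (exp (lam^2 * R^2 / 2)) \<partial>M)"
  proof (rule nn_integral_mono_AE)
    show "AE x in M. f x * nn_cond_exp M F (\<lambda>x. ennreal (g x)) x \<le> f x * ennreal (exp (lam^2 * R^2 / 2))"
      using ae1 ae2
    proof eventually_elim
      case (elim x)
      have "real_cond_exp M F g x \<le> exp (lam^2 * R^2 / 2)" using elim(2) aa by (rule order_trans)
      hence "nn_cond_exp M F (\<lambda>x. ennreal (g x)) x \<le> ennreal (exp (lam^2 * R^2 / 2))"
        using elim(1) by (simp add: ennreal_leI)
      thus ?case by (intro mult_left_mono) auto
    qed
  qed
  also have "\<dots> = (\<integral>\<^sup>+x. f x \<partial>M) * ennreal (exp (lam^2 * R^2 / 2))"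
    by (rule nn_integral_multc) (use fF measurable_from_subalg[OF subalg] in auto)
  also have "\<dots> \<le> ennreal (exp (lam^2 * R^2 * real k / 2)) * ennreal (exp (lam^2 * R^2 / 2))"
    using Suc.IH Suc.prems unfolding f_def by (intro mult_right_mono) auto
  also have "\<dots> = ennreal (exp (lam^2 * R^2 * real (Suc k) / 2))"
    by (simp add: ennreal_mult[symmetric] exp_add[symmetric] add_divide_distrib algebra_simps)
  finally show ?case .
qed

lemma tail_bound:
  fixes c :: "nat \<Rightarrow> real" and thr :: real
  assumes c: "\<And>t. t < n \<Longrightarrow> \<bar>c t\<bar> \<le> 1" and thr: "thr > 0" and R: "R > 0" and n: "n > 0"
  shows "measure M {x \<in> space M. (\<Sum>t<n. c t * \<eta> t x) \<ge> thr} \<le> exp (- (thr^2) / (2 * R^2 * real n))"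
proof -
  interpret prob_space M by (rule prob)
  define lam where "lam = thr / (R^2 * real n)"
  have lam: "lam > 0" unfolding lam_def using thr R n by simp
  define Z where "Z = (\<lambda>x. \<Sum>t<n. c t * \<eta> t x)"
  have Zm[measurable]: "Z \<in> borel_measurable M" unfolding Z_def
    by (intro borel_measurable_sum borel_measurable_times borel_measurable_const meas) auto
  have "emeasure M {x \<in> space M. Z x \<ge> thr} = (\<integral>\<^sup>+x. indicator {x \<in> space M. Z x \<ge> thr} x \<partial>M)"
    by (rule nn_integral_indicator[symmetric]) measurable
  also have "\<dots> \<le> (\<integral>\<^sup>+x. ennreal (exp (- lam * thr)) * ennreal (exp (lam * Z x)) \<partial>M)"
  proof (rule nn_integral_mono)
    fix x assume "x \<in> space M"
    show "indicator {x \<in> space M. Z x \<ge> thr} x \<le> ennreal (exp (- lam * thr)) * ennreal (exp (lam * Z x))"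
    proof (cases "Z x \<ge> thr")
      case True
      hence "1 \<le> exp (- lam * thr) * exp (lam * Z x)"
        using lam by (simp add: exp_add[symmetric] algebra_simps)
      thus ?thesis by (simp add: indicator_def ennreal_mult[symmetric] ennreal_1[symmetric] del: ennreal_1)
    qed (simp add: indicator_def)
  qed
  also have "\<dots> = ennreal (exp (- lam * thr)) * (\<integral>\<^sup>+x. ennreal (exp (lam * Z x)) \<partial>M)"
    by (rule nn_integral_cmult) measurable
  also have "\<dots> \<le> ennreal (exp (- lam * thr)) * ennreal (exp (lam^2 * R^2 * real n / 2))"
    using mgf_bound[OF c, where k = n and lam = lam] unfolding Z_def by (intro mult_left_mono) auto
  also have "\<dots> = ennreal (exp (- (thr^2) / (2 * R^2 * real n)))"
  proof -
    have "- lam * thr + lam^2 * R^2 * real n / 2 = - (thr^2) / (2 * R^2 * real n)"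
      unfolding lam_def using R n by (simp add: field_simps power2_eq_square)
    thus ?thesis by (simp add: ennreal_mult[symmetric] exp_add[symmetric])
  qed
  finally show ?thesis unfolding Z_def
    by (simp add: emeasure_eq_measure)
qed

end


lemma coeff_unique:
  assumes B: "B \<in> carrier_mat d d0"
    and ker: "\<forall>\<nu>\<in>carrier_vec d0. B *\<^sub>v \<nu> = 0\<^sub>v d \<longrightarrow> \<nu> = 0\<^sub>v d0"
    and nu: "(\<nu>::real vec) \<in> carrier_vec d0"
  shows "coeffs d0 B (B *\<^sub>v \<nu>) = \<nu>"
  unfolding coeffs_def
proof (rule the_equality)
  show "\<nu> \<in> carrier_vec d0 \<and> B *\<^sub>v \<nu> = B *\<^sub>v \<nu>" using nu by simp
next
  fix y assume y: "y \<in> carrier_vec d0 \<and> B *\<^sub>v \<nu> = B *\<^sub>v y"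
  have "B *\<^sub>v (y - \<nu>) = B *\<^sub>v y - B *\<^sub>v \<nu>"
    by (rule mult_minus_distrib_mat_vec[OF B]) (use y nu in auto)
  also have "\<dots> = 0\<^sub>v d" using y B by simp
  finally have "y - \<nu> = 0\<^sub>v d0" using ker y nu by simp
  hence "\<forall>i<d0. y $ i = \<nu> $ i"
    using y nu by (metis (no_types, lifting) carrier_vecD eq_iff_diff_eq_0 index_minus_vec(1) index_zero_vec(1))
  thus "y = \<nu>" using y nu by (intro eq_vecI) auto
qed

lemma finite_path_vecs: "finite (path_vecs d)"
proof -
  have "path_vecs d \<subseteq> (\<lambda>f. Matrix.vec d f) ` (PiE {..<d} (\<lambda>_. {0::real, 1}))"
  proof
    fix a assume a: "a \<in> path_vecs d"
    have "a = Matrix.vec d (restrict (\<lambda>i. a $ i) {..<d})"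
      using a by (intro eq_vecI) (auto simp: path_vecs_def)
    moreover have "restrict (\<lambda>i. a $ i) {..<d} \<in> PiE {..<d} (\<lambda>_. {0::real, 1})"
      using a by (auto simp: path_vecs_def)
    ultimately show "a \<in> (\<lambda>f. Matrix.vec d f) ` (PiE {..<d} (\<lambda>_. {0::real, 1}))" by blast
  qed
  moreover have "finite (PiE {..<d} (\<lambda>_. {0::real, 1}))" by (intro finite_PiE) auto
  ultimately show ?thesis by (meson finite_surj)
qed

lemma final_arith:
  fixes d0 :: nat and \<delta> :: real
  assumes d0: "0 < d0" and dl: "0 < \<delta>" "\<delta> < 1"
  shows "2 ^ d0 * exp (- (16 * ln 6 * real d0 + 16 * ln (1 / \<delta>))) \<le> \<delta>"
proof -
  have l2: "ln (2::real) \<le> 16 * ln 6"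
  proof -
    have "ln (2::real) \<le> ln 6" by simp
    moreover have "0 \<le> ln (6::real)" by simp
    ultimately show ?thesis by linarith
  qed
  have ld: "ln \<delta> \<le> 0" using dl by simp
  have "(2::real) ^ d0 = exp (real d0 * ln 2)" by (simp add: exp_of_nat_mult)
  hence "2 ^ d0 * exp (- (16 * ln 6 * real d0 + 16 * ln (1 / \<delta>)))
       = exp (real d0 * ln 2 - (16 * ln 6 * real d0 + 16 * ln (1 / \<delta>)))"
    by (simp add: exp_add[symmetric])
  also have "\<dots> \<le> exp (ln \<delta>)"
  proof (rule exp_le_cancel_iff[THEN iffD2])
    have "ln (1 / \<delta>) = - ln \<delta>" using dl by (simp add: ln_div)
    moreover have "real d0 * ln 2 \<le> real d0 * (16 * ln 6)" using l2 by (intro mult_left_mono) auto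
    ultimately show "real d0 * ln 2 - (16 * ln 6 * real d0 + 16 * ln (1 / \<delta>)) \<le> ln \<delta>"
      using ld by (simp add: algebra_simps)
  qed
  also have "\<dots> = \<delta>" using dl by simp
  finally show ?thesis .
qed

theorem theorem6p2:
  fixes M :: "'w measure" and \<eta> :: "nat \<Rightarrow> 'w \<Rightarrow> real"
    and d d0 m :: nat and A :: "real vec set" and B :: "real mat"
    and \<sigma> :: "nat \<Rightarrow> nat" and \<mu> :: "real vec" and R \<delta> :: real
  assumes "prob_space M"
    and "A \<subseteq> path_vecs d"
    and "0 < d0" and "d0 < d"
    and "is_basis_of d d0 B A"
    and "\<mu> \<in> carrier_vec d"
    and "0 < R"
    and "0 < m"
    and "epoch_schedule m d0 \<sigma>"
    and "\<And>t. t < m*d0 \<Longrightarrow> \<eta> t \<in> borel_measurable M"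
    and "\<And>t. t < m*d0 \<Longrightarrow> integrable M (\<eta> t)"
    and "\<And>t. t < m*d0 \<Longrightarrow>
           AE x in M. real_cond_exp M (noise_filt M \<eta> t) (\<eta> t) x = 0"
    and "\<And>t \<alpha>. t < m*d0 \<Longrightarrow> integrable M (\<lambda>x. exp (\<alpha> * \<eta> t x))"
    and "\<And>t \<alpha>. t < m*d0 \<Longrightarrow>
           AE x in M. real_cond_exp M (noise_filt M \<eta> t) (\<lambda>y. exp (\<alpha> * \<eta> t y)) x
                       \<le> exp (\<alpha>^2 * R^2 / 2)"
    and "0 < \<delta>" and "\<delta> < 1"
  shows "measure M {x \<in> space M. \<exists>a\<in>A.
           \<bar>scalar_prod a \<mu>
             - scalar_prod a (ls_estimate (design_mat d m d0 B \<sigma>)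
                                 (delay_vec m d0 B \<sigma> \<mu> (\<lambda>t. \<eta> t x)))\<bar>
           \<ge> coeff_bound d0 B A * R *
              sqrt ((32 * ln 6 * real d0^2 + 32 * real d0 * ln (1/\<delta>)) / real m)}
         \<le> \<delta>"
proof -
  note asm = assms
  interpret P: prob_space M by (rule asm(1))
  interpret NS: noise_setup M \<eta> "m*d0" R
    by unfold_locales (use asm in auto)
  let ?n = "m * d0"
  have Bc: "B \<in> carrier_mat d d0" and colA: "\<forall>j<d0. col B j \<in> A"
    and ker: "\<forall>\<nu>\<in>carrier_vec d0. B *\<^sub>v \<nu> = 0\<^sub>v d \<longrightarrow> \<nu> = 0\<^sub>v d0"
    and span: "\<forall>a\<in>A. \<exists>\<nu>\<in>carrier_vec d0. a = B *\<^sub>v \<nu>"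
    using asm(5) unfolding is_basis_of_def by auto
  have sched: "epoch_schedule m d0 \<sigma>" by (rule asm(9))
  have mpos: "0 < m" by (rule asm(8))
  have mu: "\<mu> \<in> carrier_vec d" by (rule asm(6))
  have R: "0 < R" by (rule asm(7))
  have d0: "0 < d0" by (rule asm(3))
  have srange: "\<And>t. t < ?n \<Longrightarrow> \<sigma> t < d0" by (rule sched_range[OF sched])
  define S where "S = coeff_bound d0 B A"
  define cc where "cc = 32 * ln 6 * real d0^2 + 32 * real d0 * ln (1/\<delta>)"
  define thr where "thr = S * R * sqrt (cc / real m)"
  define tau where "tau = real m * R * sqrt (cc / real m)"
  have finA: "finite A" using finite_path_vecs asm(2) by (rule finite_subset[rotated])
  have coeffs_ok: "coeffs d0 B a \<in> carrier_vec d0 \<and> a = B *\<^sub>v coeffs d0 B a" if "a \<in> A" for a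
  proof -
    from bspec[OF span that] obtain \<nu> where nu: "\<nu> \<in> carrier_vec d0" "a = B *\<^sub>v \<nu>" by (rule bexE)
    thus ?thesis using coeff_unique[OF Bc ker nu(1)] by simp
  qed
  have finS: "finite {\<bar>coeffs d0 B a $ i\<bar> | a i. a \<in> A \<and> i < d0}"
  proof -
    have "{\<bar>coeffs d0 B a $ i\<bar> | a i. a \<in> A \<and> i < d0} = (\<lambda>(a,i). \<bar>coeffs d0 B a $ i\<bar>) ` (A \<times> {..<d0})"
      by auto
    thus ?thesis using finA by simp
  qed
  have Sbound: "\<bar>coeffs d0 B a $ i\<bar> \<le> S" if "a \<in> A" "i < d0" for a i
    unfolding S_def coeff_bound_def by (rule Max_ge[OF finS]) (use that in blast)
  have Spos: "S > 0"
  proof -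
    have c0: "col B 0 \<in> A" using colA d0 by simp
    have uv: "B *\<^sub>v unit_vec d0 0 = col B 0"
      using Bc d0 by (intro eq_vecI) auto
    have "coeffs d0 B (col B 0) = unit_vec d0 0"
      using coeff_unique[OF Bc ker, of "unit_vec d0 0"] uv d0 by simp
    hence "\<bar>coeffs d0 B (col B 0) $ 0\<bar> = 1" using d0 by simp
    thus ?thesis using Sbound[OF c0 d0] by simp
  qed
  have ccpos: "cc > 0"
  proof -
    have "ln (1 / \<delta>) > 0" using asm(15,16) by simp
    moreover have "ln (6::real) > 0" by simp
    ultimately show ?thesis unfolding cc_def using d0 by (simp add: add_pos_nonneg)
  qed
  have taupos: "tau > 0" unfolding tau_def using mpos R ccpos by simp
  define SS where "SS = PiE {..<d0} (\<lambda>_. {-1::real, 1})"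
  define Ev where "Ev = (\<lambda>s. {x \<in> space M. tau \<le> (\<Sum>t<?n. s (\<sigma> t) * \<eta> t x)})"
  have finSS: "finite SS" unfolding SS_def by (intro finite_PiE) auto
  have cardSS: "card SS = 2 ^ d0" unfolding SS_def by (simp add: card_PiE numeral_2_eq_2)
  have Zm: "(\<lambda>x. \<Sum>t<?n. s (\<sigma> t) * \<eta> t x) \<in> borel_measurable M" for s
    by (intro borel_measurable_sum borel_measurable_times borel_measurable_const asm(10)) auto
  have Ev_sets: "Ev s \<in> sets M" for s
    using Zm[of s] unfolding Ev_def borel_measurable_iff_ge by blast
  have sub: "{x \<in> space M. \<exists>a\<in>A.
           \<bar>scalar_prod a \<mu>
             - scalar_prod a (ls_estimate (design_mat d m d0 B \<sigma>)
                                 (delay_vec m d0 B \<sigma> \<mu> (\<lambda>t. \<eta> t x)))\<bar>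
           \<ge> coeff_bound d0 B A * R *
              sqrt ((32 * ln 6 * real d0^2 + 32 * real d0 * ln (1/\<delta>)) / real m)}
        \<subseteq> (\<Union>s\<in>SS. Ev s)"
  proof
    fix x assume xin: "x \<in> {x \<in> space M. \<exists>a\<in>A.
           \<bar>scalar_prod a \<mu>
             - scalar_prod a (ls_estimate (design_mat d m d0 B \<sigma>)
                                 (delay_vec m d0 B \<sigma> \<mu> (\<lambda>t. \<eta> t x)))\<bar>
           \<ge> coeff_bound d0 B A * R *
              sqrt ((32 * ln 6 * real d0^2 + 32 * real d0 * ln (1/\<delta>)) / real m)}"
    from xin have xin2: "x \<in> space M \<and> (\<exists>a\<in>A. \<bar>scalar_prod a \<mu>
             - scalar_prod a (ls_estimate (design_mat d m d0 B \<sigma>)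
                                 (delay_vec m d0 B \<sigma> \<mu> (\<lambda>t. \<eta> t x)))\<bar>
           \<ge> coeff_bound d0 B A * R *
              sqrt ((32 * ln 6 * real d0^2 + 32 * real d0 * ln (1/\<delta>)) / real m))"
      by (rule CollectD)
    hence x: "x \<in> space M" by (rule conjunct1)
    from xin2 have "\<exists>a\<in>A. \<bar>scalar_prod a \<mu>
             - scalar_prod a (ls_estimate (design_mat d m d0 B \<sigma>)
                                 (delay_vec m d0 B \<sigma> \<mu> (\<lambda>t. \<eta> t x)))\<bar>
           \<ge> coeff_bound d0 B A * R *
              sqrt ((32 * ln 6 * real d0^2 + 32 * real d0 * ln (1/\<delta>)) / real m)"
      by (rule conjunct2)
    then obtain a where a: "a \<in> A" and ge0: "\<bar>scalar_prod a \<mu>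
             - scalar_prod a (ls_estimate (design_mat d m d0 B \<sigma>)
                                 (delay_vec m d0 B \<sigma> \<mu> (\<lambda>t. \<eta> t x)))\<bar>
           \<ge> coeff_bound d0 B A * R *
              sqrt ((32 * ln 6 * real d0^2 + 32 * real d0 * ln (1/\<delta>)) / real m)"
      by (rule bexE)
    have ge: "thr \<le> \<bar>scalar_prod a \<mu> - scalar_prod a (ls_estimate (design_mat d m d0 B \<sigma>)
                                 (delay_vec m d0 B \<sigma> \<mu> (\<lambda>t. \<eta> t x)))\<bar>"
      using ge0 unfolding thr_def S_def cc_def .
    define \<nu> where "\<nu> = coeffs d0 B a"
    have nu: "\<nu> \<in> carrier_vec d0" and anu: "a = B *\<^sub>v \<nu>" using coeffs_ok[OF a] unfolding \<nu>_def by auto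
    define xi where "xi = (\<lambda>j. \<Sum>t\<in>{t. t < ?n \<and> \<sigma> t = j}. \<eta> t x)"
    define sg where "sg = (\<lambda>j. if xi j \<ge> 0 then 1 else (-1::real))"
    define s where "s = restrict sg {..<d0}"
    have sSS: "s \<in> SS" unfolding s_def SS_def sg_def by auto
    have diff: "scalar_prod a \<mu> - scalar_prod a (ls_estimate (design_mat d m d0 B \<sigma>)
                                 (delay_vec m d0 B \<sigma> \<mu> (\<lambda>t. \<eta> t x)))
         = - (1 / real m) * (\<Sum>t<?n. \<nu> $ (\<sigma> t) * \<eta> t x)"
      unfolding anu by (rule la_main[OF Bc ker sched mpos mu nu])
    have sum1: "(\<Sum>t<?n. \<nu> $ (\<sigma> t) * \<eta> t x) = (\<Sum>j<d0. \<nu> $ j * xi j)"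
      unfolding xi_def by (rule swap_sum[symmetric]) (rule srange)
    have sum2: "(\<Sum>t<?n. s (\<sigma> t) * \<eta> t x) = (\<Sum>j<d0. s j * xi j)"
      unfolding xi_def by (rule swap_sum[symmetric]) (rule srange)
    have "\<bar>\<Sum>j<d0. \<nu> $ j * xi j\<bar> \<le> (\<Sum>j<d0. \<bar>\<nu> $ j\<bar> * \<bar>xi j\<bar>)"
      by (rule order_trans[OF sum_abs]) (simp add: abs_mult)
    also have "\<dots> \<le> (\<Sum>j<d0. S * \<bar>xi j\<bar>)"
    proof (rule sum_mono)
      fix j assume "j \<in> {..<d0}"
      hence "\<bar>\<nu> $ j\<bar> \<le> S" unfolding \<nu>_def by (intro Sbound[OF a]) simp
      thus "\<bar>\<nu> $ j\<bar> * \<bar>xi j\<bar> \<le> S * \<bar>xi j\<bar>" by (rule mult_right_mono) simp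
    qed
    also have "\<dots> = (\<Sum>j<d0. S * (s j * xi j))"
    proof (rule sum.cong)
      fix j assume "j \<in> {..<d0}"
      thus "S * \<bar>xi j\<bar> = S * (s j * xi j)" unfolding s_def sg_def by simp
    qed simp
    also have "\<dots> = S * (\<Sum>t<?n. s (\<sigma> t) * \<eta> t x)" unfolding sum2 by (rule sum_distrib_left[symmetric])
    finally have bnd: "\<bar>\<Sum>j<d0. \<nu> $ j * xi j\<bar> \<le> S * (\<Sum>t<?n. s (\<sigma> t) * \<eta> t x)" .
    have "\<bar>scalar_prod a \<mu> - scalar_prod a (ls_estimate (design_mat d m d0 B \<sigma>)
                                 (delay_vec m d0 B \<sigma> \<mu> (\<lambda>t. \<eta> t x)))\<bar>
        = (1 / real m) * \<bar>\<Sum>j<d0. \<nu> $ j * xi j\<bar>"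
      unfolding diff sum1 by (simp add: abs_mult)
    also have "\<dots> \<le> (1 / real m) * (S * (\<Sum>t<?n. s (\<sigma> t) * \<eta> t x))"
      by (rule mult_left_mono[OF bnd]) simp
    finally have "thr \<le> (1 / real m) * (S * (\<Sum>t<?n. s (\<sigma> t) * \<eta> t x))"
      using ge by (rule order_trans[rotated])
    hence "real m * thr \<le> S * (\<Sum>t<?n. s (\<sigma> t) * \<eta> t x)"
      using mpos by (simp add: field_simps)
    moreover have "real m * thr = S * tau" unfolding thr_def tau_def by (simp add: algebra_simps)
    ultimately have "S * tau \<le> S * (\<Sum>t<?n. s (\<sigma> t) * \<eta> t x)" by simp
    hence tauZ: "tau \<le> (\<Sum>t<?n. s (\<sigma> t) * \<eta> t x)" using Spos by (simp add: mult_le_cancel_left_pos)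
    have "x \<in> Ev s" unfolding Ev_def using x tauZ by (intro CollectI conjI)
    thus "x \<in> (\<Union>s\<in>SS. Ev s)" using sSS by (rule UN_I[rotated])
  qed
  have tb: "measure M (Ev s) \<le> exp (- (tau^2) / (2 * R^2 * real ?n))" if "s \<in> SS" for s
  proof -
    have "\<bar>s (\<sigma> t)\<bar> \<le> 1" if "t < ?n" for t
    proof -
      have sS: "s \<in> PiE {..<d0} (\<lambda>_. {-1::real, 1})" using \<open>s \<in> SS\<close> unfolding SS_def .
      have "s (\<sigma> t) \<in> {-1::real, 1}" by (rule PiE_mem[OF sS]) (simp add: srange[OF that])
      thus ?thesis by auto
    qed
    thus ?thesis unfolding Ev_def
      by (intro NS.tail_bound taupos R) (use mpos d0 in auto)
  qed
  have tau2: "tau^2 / (2 * R^2 * real ?n) = 16 * ln 6 * real d0 + 16 * ln (1 / \<delta>)"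
  proof -
    have "tau^2 = real m^2 * R^2 * (cc / real m)"
      unfolding tau_def using ccpos mpos by (simp add: power_mult_distrib)
    also have "\<dots> = real m * R^2 * cc" using mpos by (simp add: power2_eq_square)
    finally have "tau^2 = real m * R^2 * cc" .
    thus ?thesis unfolding cc_def using mpos R d0
      by (simp add: field_simps power2_eq_square)
  qed
  have "measure M {x \<in> space M. \<exists>a\<in>A.
           \<bar>scalar_prod a \<mu>
             - scalar_prod a (ls_estimate (design_mat d m d0 B \<sigma>)
                                 (delay_vec m d0 B \<sigma> \<mu> (\<lambda>t. \<eta> t x)))\<bar>
           \<ge> coeff_bound d0 B A * R *
              sqrt ((32 * ln 6 * real d0^2 + 32 * real d0 * ln (1/\<delta>)) / real m)}
        \<le> measure M (\<Union>s\<in>SS. Ev s)"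
    by (rule P.finite_measure_mono[OF sub]) (use finSS Ev_sets in auto)
  also have "\<dots> \<le> (\<Sum>s\<in>SS. measure M (Ev s))"
    by (rule P.finite_measure_subadditive_finite[OF finSS]) (use Ev_sets in auto)
  also have "\<dots> \<le> (\<Sum>s\<in>SS. exp (- (tau^2) / (2 * R^2 * real ?n)))"
    by (rule sum_mono) (rule tb)
  also have "\<dots> = 2 ^ d0 * exp (- (16 * ln 6 * real d0 + 16 * ln (1 / \<delta>)))"
    using tau2 cardSS by (simp add: minus_divide_left[symmetric])
  also have "\<dots> \<le> \<delta>" by (rule final_arith[OF d0 asm(15,16)])
  finally show ?thesis .
qed


end
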